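(* Let $G=(V,E)$ be a word-representable graph with $n=|V|$ and representation number $k$. Unless $G$ is a circle graph containing $K_{n-1}$ as an induced subgraph, $G$ is $\left(\lceil kn/2\rceil-1\right)$-complete square-free uniform word-representable.
   Context: A graph $G=(V,E)$ is word-representable if there is a word $w$ over $V$, containing every letter of $V$, such that distinct $x,y\in V$ alternate in $w$ (deleting all other letters yields $xyxy\cdots$ or $yxyx\cdots$) iff $xy\in E$; $w$ represents $G$. A word is $k$-uniform if every letter occurs exactly $k$ times, and uniform if it is $k$-uniform for some $k$. The representation number of a word-representable graph is the least $k$ such that it is represented by a $k$-uniform word. For a word $w$ over $\Sigma$ and $S\subseteq\Sigma$, $w_S$ denotes the word obtained from $w$ by deleting all letters not in $S$. For an integer $p\ge1$, $w$ contains a $p$-complete square if there exists $S\subseteq\Sigma$ such that $w_S$ contains a factor $XX$ with $X\in S^+$ and $|X|\ge p$; otherwise $w$ is $p$-complete square-free. A graph $G$ is $p$-complete square-free uniform word-representable if it is represented by a uniform word $w$ that is $p$-complete square-free. *)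

theory Defs
  imports Complex_Main
begin

definition simple_graph :: "'a set \<Rightarrow> ('a \<times> 'a) set \<Rightarrow> bool" where
  "simple_graph V E \<longleftrightarrow> finite V \<and> E \<subseteq> V \<times> V \<and> sym E \<and> irrefl E"

text \<open>A word in which no two consecutive letters are equal (i.e. of the form xyxy... or yxyx...
  when only two letters occur).\<close>
definition alternating_list :: "'a list \<Rightarrow> bool" where
  "alternating_list u \<longleftrightarrow> (\<forall>i. Suc i < length u \<longrightarrow> u ! i \<noteq> u ! Suc i)"

definition restrict_word :: "'a list \<Rightarrow> 'a set \<Rightarrow> 'a list" where
  "restrict_word w S = filter (\<lambda>c. c \<in> S) w"

definition alternate_in :: "'a list \<Rightarrow> 'a \<Rightarrow> 'a \<Rightarrow> bool" where
  "alternate_in w x y \<longleftrightarrow> alternating_list (restrict_word w {x, y})"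

definition represents :: "'a set \<Rightarrow> ('a \<times> 'a) set \<Rightarrow> 'a list \<Rightarrow> bool" where
  "represents V E w \<longleftrightarrow> set w = V \<and>
     (\<forall>x\<in>V. \<forall>y\<in>V. x \<noteq> y \<longrightarrow> (alternate_in w x y \<longleftrightarrow> (x, y) \<in> E))"

definition word_representable :: "'a set \<Rightarrow> ('a \<times> 'a) set \<Rightarrow> bool" where
  "word_representable V E \<longleftrightarrow> (\<exists>w. represents V E w)"

definition k_uniform :: "nat \<Rightarrow> 'a list \<Rightarrow> bool" where
  "k_uniform k w \<longleftrightarrow> (\<forall>x\<in>set w. count_list w x = k)"

definition uniform_word :: "'a list \<Rightarrow> bool" where
  "uniform_word w \<longleftrightarrow> (\<exists>k. k_uniform k w)"

definition representation_number :: "'a set \<Rightarrow> ('a \<times> 'a) set \<Rightarrow> nat" where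
  "representation_number V E = (LEAST k. \<exists>w. k_uniform k w \<and> represents V E w)"

definition has_p_complete_square :: "nat \<Rightarrow> 'a list \<Rightarrow> bool" where
  "has_p_complete_square p w \<longleftrightarrow>
     (\<exists>S X u v. X \<noteq> [] \<and> set X \<subseteq> S \<and> length X \<ge> p \<and>
                restrict_word w S = u @ X @ X @ v)"

definition p_complete_square_free :: "nat \<Rightarrow> 'a list \<Rightarrow> bool" where
  "p_complete_square_free p w \<longleftrightarrow> \<not> has_p_complete_square p w"

definition p_csf_uniform_word_representable :: "nat \<Rightarrow> 'a set \<Rightarrow> ('a \<times> 'a) set \<Rightarrow> bool" where
  "p_csf_uniform_word_representable p V E \<longleftrightarrow>
     (\<exists>w. uniform_word w \<and> represents V E w \<and> p_complete_square_free p w)"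

text \<open>Circle graph, combinatorially via chord diagrams: there is a double occurrence word
  (each vertex occurs exactly twice, reading the chord endpoints around the circle) such that
  two vertices are adjacent iff their chords cross, i.e. iff they interleave in the word.\<close>
definition circle_graph :: "'a set \<Rightarrow> ('a \<times> 'a) set \<Rightarrow> bool" where
  "circle_graph V E \<longleftrightarrow> (\<exists>w. set w = V \<and> (\<forall>x\<in>V. count_list w x = 2) \<and>
     (\<forall>x\<in>V. \<forall>y\<in>V. x \<noteq> y \<longrightarrow> (alternate_in w x y \<longleftrightarrow> (x, y) \<in> E)))"

definition contains_induced_clique :: "'a set \<Rightarrow> ('a \<times> 'a) set \<Rightarrow> nat \<Rightarrow> bool" where
  "contains_induced_clique V E m \<longleftrightarrow>
     (\<exists>U\<subseteq>V. card U = m \<and> (\<forall>x\<in>U. \<forall>y\<in>U. x \<noteq> y \<longrightarrow> (x, y) \<in> E))"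

end

theory Submission
  imports Defs
begin


lemma alt_Nil[simp]: "alternating_list []"
  by (simp add: alternating_list_def)
lemma alt_single[simp]: "alternating_list [x]"
  by (simp add: alternating_list_def)
lemma all_nat_split: "(\<forall>i::nat. P i) \<longleftrightarrow> P 0 \<and> (\<forall>i. P (Suc i))"
  by (metis not0_implies_Suc)
lemma alt_Cons2[simp]: "alternating_list (x#y#zs) \<longleftrightarrow> x \<noteq> y \<and> alternating_list (y#zs)"
  unfolding alternating_list_def by (subst all_nat_split) simp

lemma alt_Cons: "alternating_list (x#L) \<longleftrightarrow> alternating_list L \<and> (L = [] \<or> hd L \<noteq> x)"
  by (cases L) auto

lemma alt_append: "alternating_list (xs@ys) \<longleftrightarrow> alternating_list xs \<and> alternating_list ys \<and> (xs = [] \<or> ys = [] \<or> last xs \<noteq> hd ys)"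
  by (induction xs) (auto simp: alt_Cons)

lemma alt_count:
  "alternating_list L \<Longrightarrow> L \<noteq> [] \<Longrightarrow> hd L = z \<Longrightarrow> set L \<subseteq> {z,z'} \<Longrightarrow> z \<noteq> z' \<Longrightarrow>
   (count_list L z = count_list L z' \<and> last L = z') \<or> (count_list L z = Suc (count_list L z') \<and> last L = z)"
proof (induction L arbitrary: z z')
  case Nil then show ?case by simp
next
  case (Cons x L)
  show ?case
  proof (cases L)
    case Nil then show ?thesis using Cons by auto
  next
    case (Cons y L')
    have "y = z'" using Cons.prems \<open>L = y # L'\<close> by auto
    have p1: "alternating_list L" using Cons.prems(1) by (simp add: alt_Cons)
    have p2: "hd L = z'" using \<open>L = y # L'\<close> \<open>y = z'\<close> by simp
    have p3: "set L \<subseteq> {z',z}" using Cons.prems(4) by auto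
    have "(count_list L z' = count_list L z \<and> last L = z) \<or> (count_list L z' = Suc (count_list L z) \<and> last L = z')"
      using Cons.IH[OF p1 _ p2 p3] Cons.prems(5) \<open>L = y # L'\<close> by blast
    moreover have "x = z" using Cons.prems(3) by simp
    moreover have "last (x#L) = last L" using \<open>L = y # L'\<close> by simp
    ultimately show ?thesis using Cons.prems(5) by (simp del: last.simps) (metis)
  qed
qed

lemma alt_sq_eq:
  assumes "set L \<subseteq> {x,y}" "x \<noteq> y" "count_list L x = count_list L y" "L \<noteq> []"
  shows "alternating_list (L@L) \<longleftrightarrow> alternating_list L"
proof
  assume "alternating_list (L@L)" then show "alternating_list L" by (simp add: alt_append)
next
  assume a: "alternating_list L"
  have "hd L \<in> {x,y}" using assms by (auto intro: hd_in_set)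
  then have "last L \<noteq> hd L"
  proof
    assume h: "hd L = x"
    show ?thesis using alt_count[OF a assms(4) h _ assms(2)] assms h by auto
  next
    assume h: "hd L \<in> {y}"
    then have h: "hd L = y" by simp
    have "set L \<subseteq> {y,x}" using assms by auto
    then show ?thesis using alt_count[OF a assms(4) h _ assms(2)[symmetric]] assms h by auto
  qed
  then show "alternating_list (L@L)" using a by (simp add: alt_append)
qed

lemma alt_sq_neq:
  assumes "set L \<subseteq> {x,y}" "x \<noteq> y" "count_list L x = Suc (count_list L y)"
  shows "\<not> alternating_list (L@L)"
proof
  assume aa: "alternating_list (L@L)"
  then have a: "alternating_list L" by (simp add: alt_append)
  have ne: "L \<noteq> []" using assms by auto
  have "hd L \<in> {x,y}" using assms ne by (auto intro: hd_in_set)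
  then have "last L = hd L"
  proof
    assume h: "hd L = x"
    show ?thesis using alt_count[OF a ne h _ assms(2)] assms h by auto
  next
    assume h: "hd L \<in> {y}"
    then have h: "hd L = y" by simp
    have "set L \<subseteq> {y,x}" using assms by auto
    then show ?thesis using alt_count[OF a ne h _ assms(2)[symmetric]] assms h by auto
  qed
  then show False using aa ne by (simp add: alt_append)
qed

lemma distinct_alt: "distinct L \<Longrightarrow> alternating_list L"
  by (induction L) (auto simp: alt_Cons dest: hd_in_set)

lemma restrict_Cons[simp]: "restrict_word (x#w) S = (if x \<in> S then x # restrict_word w S else restrict_word w S)"
  by (simp add: restrict_word_def)
lemma restrict_Nil[simp]: "restrict_word [] S = []"
  by (simp add: restrict_word_def)
lemma restrict_append[simp]: "restrict_word (u@v) S = restrict_word u S @ restrict_word v S"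
  by (simp add: restrict_word_def)
lemma set_restrict[simp]: "set (restrict_word w S) = set w \<inter> S"
  by (auto simp add: restrict_word_def)
lemma count_restrict[simp]: "count_list (restrict_word w S) y = (if y \<in> S then count_list w y else 0)"
  by (induction w) auto
lemma restrict_restrict[simp]: "restrict_word (restrict_word w S) T = restrict_word w (S \<inter> T)"
  by (simp add: restrict_word_def)

lemma first_occ:
  "finite A \<Longrightarrow> A \<noteq> {} \<Longrightarrow> A \<subseteq> set w \<Longrightarrow>
   \<exists>x\<in>A. \<exists>pre suf. w = pre @ x # suf \<and> x \<notin> set pre \<and> A - {x} \<subseteq> set pre"
proof (induction w rule: rev_induct)
  case Nil then show ?case by auto
next
  case (snoc z w)
  show ?case
  proof (cases "A \<subseteq> set w")
    case True
    then obtain x pre suf where "x \<in> A" "w = pre @ x # suf" "x \<notin> set pre" "A - {x} \<subseteq> set pre"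
      using snoc by blast
    then show ?thesis by (intro bexI[of _ x] exI[of _ pre] exI[of _ "suf @ [z]"]) auto
  next
    case False
    then obtain a where a: "a \<in> A" "a \<notin> set w" by auto
    then have "a = z" using snoc.prems by auto
    have "A - {z} \<subseteq> set w" using snoc.prems by auto
    then show ?thesis using a \<open>a = z\<close> by (intro bexI[of _ z] exI[of _ w] exI[of _ "[]"]) auto
  qed
qed

lemma step_rep:
  assumes rep: "represents V E w" and w: "w = pre @ x # suf" and xn: "x \<notin> set pre"
    and mn: "\<forall>y\<in>V. count_list w x \<le> count_list w y"
    and eq: "\<forall>y\<in>V. count_list w y = count_list w x \<longrightarrow> y \<noteq> x \<longrightarrow> y \<in> set pre"
  shows "represents V E (x # w)"
proof -
  have xV: "x \<in> V" using rep w by (auto simp: represents_def)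
  have key: "alternate_in (x#w) y z \<longleftrightarrow> alternate_in w y z" if "y \<in> V" "z \<in> V" "y \<noteq> z" for y z
  proof (cases "x \<in> {y,z}")
    case False then show ?thesis by (simp add: alternate_in_def)
  next
    case True
    define y' where "y' = (if x = y then z else y)"
    have y': "{y,z} = {x,y'}" "y' \<in> V" "y' \<noteq> x" using True that by (auto simp: y'_def)
    define R where "R = restrict_word w {x,y'}"
    have R: "restrict_word (x#w) {y,z} = x # R" "restrict_word w {y,z} = R"
      using y' by (auto simp: R_def)
    have Rne: "R \<noteq> []" using w by (auto simp: R_def restrict_word_def)
    have "hd R \<noteq> x" if a: "alternating_list R"
    proof
      assume h: "hd R = x"
      have sR: "set R \<subseteq> {x,y'}" by (auto simp: R_def)
      have "count_list R x = count_list R y' \<or> count_list R x = Suc (count_list R y')"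
        using alt_count[OF a Rne h sR] y' by auto
      moreover have "count_list R x = count_list w x" "count_list R y' = count_list w y'"
        using y' by (auto simp: R_def)
      ultimately have "count_list w y' = count_list w x" using mn y' by force
      then have "y' \<in> set pre" using eq y' by auto
      then have "restrict_word pre {x,y'} \<noteq> []" by (auto simp: restrict_word_def filter_empty_conv)
      moreover have "set (restrict_word pre {x,y'}) \<subseteq> {y'}" using xn by auto
      ultimately have "hd R = y'" unfolding R_def w
        by (cases "restrict_word pre {x,y'}") auto
      then show False using h y' by simp
    qed
    then show ?thesis unfolding alternate_in_def R using Rne by (auto simp: alt_Cons)
  qed
  show ?thesis using rep key xV unfolding represents_def by auto
qed

lemma uniformize_aux:
  assumes fin: "finite V"
  shows "represents V E w \<Longrightarrow> (\<forall>y\<in>V. count_list w y \<le> M) \<Longrightarrow> (\<Sum>y\<in>V. M - count_list w y) = D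
    \<Longrightarrow> \<exists>w'. k_uniform M w' \<and> represents V E w'"
proof (induction D arbitrary: w rule: less_induct)
  case (less D w)
  have sw: "set w = V" using less.prems by (simp add: represents_def)
  show ?case
  proof (cases "\<forall>y\<in>V. count_list w y = M")
    case True
    then show ?thesis using less.prems sw by (auto simp: k_uniform_def)
  next
    case False
    then obtain y0 where y0: "y0 \<in> V" "count_list w y0 < M" using less.prems(2) by force
    define c where "c = Min (count_list w ` V)"
    have cle: "\<forall>y\<in>V. c \<le> count_list w y" using fin by (auto simp: c_def)
    have cin: "c \<in> count_list w ` V" using fin y0 unfolding c_def by (intro Min_in) auto
    have cM: "c < M" using cle y0 by force
    define A where "A = {y\<in>V. count_list w y = c}"
    have "finite A" "A \<noteq> {}" "A \<subseteq> set w" using fin cin sw by (auto simp: A_def)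
    from first_occ[OF this] obtain x pre suf where x: "x \<in> A" "w = pre @ x # suf" "x \<notin> set pre" "A - {x} \<subseteq> set pre"
      by blast
    have cx: "count_list w x = c" "x \<in> V" using x by (auto simp: A_def)
    have rep': "represents V E (x # w)"
      using step_rep[OF less.prems(1) x(2) x(3)] cle cx x(4) unfolding A_def by auto
    have b': "\<forall>y\<in>V. count_list (x#w) y \<le> M" using less.prems(2) cM cx by auto
    have "(\<Sum>y\<in>V. M - count_list w y) = (M - count_list w x) + (\<Sum>y\<in>V-{x}. M - count_list w y)"
      using fin cx by (simp add: sum.remove)
    moreover have "(\<Sum>y\<in>V. M - count_list (x#w) y) = (M - count_list (x#w) x) + (\<Sum>y\<in>V-{x}. M - count_list (x#w) y)"
      using fin cx by (simp add: sum.remove)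
    moreover have "(\<Sum>y\<in>V-{x}. M - count_list (x#w) y) = (\<Sum>y\<in>V-{x}. M - count_list w y)"
      by (intro sum.cong) auto
    ultimately have "(\<Sum>y\<in>V. M - count_list (x#w) y) < D" using less.prems(3) cx cM by simp
    from less.IH[OF this rep' b'] show ?thesis by simp
  qed
qed

lemma uniformize:
  assumes "finite V" "represents V E w"
  shows "\<exists>k w'. k_uniform k w' \<and> represents V E w'"
proof -
  define M where "M = Max (count_list w ` V)"
  have "\<forall>y\<in>V. count_list w y \<le> M" using assms(1) by (auto simp: M_def)
  from uniformize_aux[OF assms(1) assms(2) this refl] show ?thesis by blast
qed

lemma distinct_counts: "(\<forall>z. count_list L z \<le> 1) \<Longrightarrow> distinct L"
proof (induction L)
  case Nil then show ?case by simp
next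
  case (Cons x L)
  have "count_list L x = 0" using Cons.prems[rule_format, of x] by simp
  moreover have "\<forall>z. count_list L z \<le> 1" using Cons.prems by (metis count_list.simps(2) le_trans le_add1)
  ultimately show ?case using Cons.IH by (simp add: count_list_0_iff)
qed

lemma count_two_le: "x \<noteq> y \<Longrightarrow> count_list L x + count_list L y \<le> length L"
  by (induction L) auto

lemma arith_p: "m \<le> 2 * nat (ceiling (real m / 2) - 1) + 2"
proof -
  have "real m / 2 \<le> real_of_int (ceiling (real m / 2))" by (rule le_of_int_ceiling)
  then have "real m \<le> 2 * real_of_int (ceiling (real m / 2))" by linarith
  then have "int m \<le> 2 * ceiling (real m / 2)" by linarith
  then show ?thesis by linarith
qed

lemma circ2: "k_uniform 2 w \<Longrightarrow> represents V E w \<Longrightarrow> circle_graph V E"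
  unfolding circle_graph_def k_uniform_def represents_def by blast



lemma pair_ball: "(\<forall>x\<in>{b,c}. \<forall>y\<in>{b,c}. x \<noteq> y \<longrightarrow> P x y) \<longleftrightarrow> (b \<noteq> c \<longrightarrow> P b c \<and> P c b)"
  by auto

lemma small_excluded:
  assumes "simple_graph V E" "V \<noteq> {}" "card V \<le> 2"
  shows "circle_graph V E \<and> contains_induced_clique V E (card V - 1)"
proof -
  have fin: "finite V" using assms by (simp add: simple_graph_def)
  obtain a where a: "a \<in> V" using assms by auto
  have "card V \<noteq> 0" using fin a by auto
  then consider "card V = 1" | "card V = 2" using assms by linarith
  then show ?thesis
  proof cases
    case 1
    then have V: "V = {a}" using a by (metis card_1_singletonE singletonD)
    have "circle_graph V E" unfolding circle_graph_def V
      by (intro exI[of _ "[a,a]"]) simp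
    moreover have "contains_induced_clique V E (card V - 1)" unfolding contains_induced_clique_def 1
      by (intro exI[of _ "{}"]) simp
    ultimately show ?thesis by simp
  next
    case 2
    then obtain b c where V: "V = {b,c}" "b \<noteq> c" by (metis card_2_iff)
    have sym: "(c,b) \<in> E \<longleftrightarrow> (b,c) \<in> E" using assms(1) unfolding simple_graph_def sym_def by blast
    have "circle_graph V E"
    proof (cases "(b,c) \<in> E")
      case True
      have "alternate_in [b,c,b,c] b c" "alternate_in [b,c,b,c] c b"
        using V(2) by (simp_all add: alternate_in_def)
      then show ?thesis unfolding circle_graph_def V pair_ball
        using True sym V(2) by (intro exI[of _ "[b,c,b,c]"]) (simp; blast)
    next
      case False
      have "\<not> alternate_in [b,b,c,c] b c" "\<not> alternate_in [b,b,c,c] c b"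
        using V(2) by (simp_all add: alternate_in_def)
      then show ?thesis unfolding circle_graph_def V pair_ball
        using False sym V(2) by (intro exI[of _ "[b,b,c,c]"]) (simp; blast)
    qed
    moreover have "contains_induced_clique V E (card V - 1)" unfolding contains_induced_clique_def 2
      by (intro exI[of _ "{b}"]) (simp add: V)
    ultimately show ?thesis by simp
  qed
qed



lemma restrict_cong_set: "set w \<subseteq> V \<Longrightarrow> restrict_word w S = restrict_word w (S \<inter> V)"
  unfolding restrict_word_def by (rule filter_cong) auto

lemma restrict_all: "set w \<subseteq> S \<Longrightarrow> restrict_word w S = w"
  unfolding restrict_word_def by (simp add: subset_iff)

lemma length_restrict_uniform:
  assumes "k_uniform k w" "set w = V" "T \<subseteq> V" "finite V"
  shows "length (restrict_word w T) = k * card T"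
proof -
  have "length (restrict_word w T) = (\<Sum>y\<in>T. count_list (restrict_word w T) y)"
    using assms by (intro sum_count_set[symmetric]) (auto intro: finite_subset)
  also have "\<dots> = (\<Sum>y\<in>T. k)" using assms by (intro sum.cong) (auto simp: k_uniform_def)
  finally show ?thesis by simp
qed

lemma pair_restrict_counts11:
  assumes "count_list X x = 1" "count_list X y = 1" "x \<noteq> y"
  shows "alternating_list (restrict_word X {x,y} @ restrict_word X {x,y})"
proof -
  define R where "R = restrict_word X {x,y}"
  have c: "count_list R x = 1" "count_list R y = 1" using assms by (auto simp: R_def)
  have "\<forall>z. count_list R z \<le> 1" using c by (auto simp: R_def)
  then have "alternating_list R" by (intro distinct_alt distinct_counts)
  moreover have "R \<noteq> []" using c by auto
  moreover have "set R \<subseteq> {x,y}" by (auto simp: R_def)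
  ultimately show ?thesis using alt_sq_eq[of R x y] c assms(3) unfolding R_def by simp
qed



lemma count_pos_in: "0 < count_list X y \<Longrightarrow> y \<in> set X"
  by (metis count_notin less_irrefl)

lemma alt_mid: "alternating_list (A @ B @ C) \<Longrightarrow> alternating_list B"
  by (simp add: alt_append)

lemma count_replicate: "count_list (replicate m a) y = (if y = a then m else 0)"
  by (induction m) auto

lemma restrict_replicate: "restrict_word (replicate m a) S = (if a \<in> S then replicate m a else [])"
  by (induction m) auto

lemma core:
  assumes sg: "simple_graph V E" and n3: "card V \<ge> 3"
    and excl: "\<not> (circle_graph V E \<and> contains_induced_clique V E (card V - 1))"
    and ku: "k_uniform k w" and rep: "represents V E w"
    and minl: "\<And>j w'. j < k \<Longrightarrow> k_uniform j w' \<Longrightarrow> represents V E w' \<Longrightarrow> False"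
    and k2: "k \<ge> 2"
    and sq: "X \<noteq> []" "set X \<subseteq> S" "restrict_word w S = u' @ X @ X @ v'"
    and len: "k * card V \<le> 2 * length X + 2"
  shows False
proof -
  define n where "n = card V"
  have fin: "finite V" using sg by (simp add: simple_graph_def)
  have sw: "set w = V" using rep by (simp add: represents_def)
  have cw: "\<And>y. y \<in> V \<Longrightarrow> count_list w y = k" using ku sw by (auto simp: k_uniform_def)
  define T where "T = S \<inter> V"
  have wT: "restrict_word w T = u' @ X @ X @ v'" using sq(3) restrict_cong_set[of w V S] sw
    by (simp add: T_def)
  have lT: "length (restrict_word w T) = k * card T"
    using length_restrict_uniform[OF ku sw _ fin] by (simp add: T_def)
  have l2: "2 * length X \<le> k * card T" using lT wT by simp
  show False
  proof (cases "T = V")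
    case False
    have "card T < n" using False fin unfolding n_def T_def by (intro psubset_card_mono) auto
    then have "k * card T \<le> k * (n - 1)" by (intro mult_le_mono2) simp
    moreover have "k * (n - 1) = k * n - k" by (simp add: right_diff_distrib')
    moreover have "k * n \<ge> k" using n3 unfolding n_def by simp
    ultimately have kk: "k = 2" using l2 len k2 unfolding n_def by linarith
    have cT: "card T = n - 1" using l2 len \<open>card T < n\<close> unfolding kk n_def by linarith
    have e: "length u' + 2*length X + length v' = 2*(n-1)" using lT wT cT kk by simp
    have "length u' + length v' = 0" using e len[unfolded kk] n3 unfolding n_def by linarith
    then have uv: "u' = []" "v' = []" by auto
    have wT2: "restrict_word w T = X @ X" using wT uv by simp
    have cX: "count_list X y = 1" if "y \<in> T" for y
    proof -
      have "count_list (restrict_word w T) y = 2" using that cw kk by (auto simp: T_def)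
      then show ?thesis using wT2 by simp
    qed
    have clique: "(x,y) \<in> E" if "x \<in> T" "y \<in> T" "x \<noteq> y" for x y
    proof -
      have "restrict_word w {x,y} = restrict_word (restrict_word w T) {x,y}"
        using that by (simp add: Int_absorb1)
      also have "\<dots> = restrict_word X {x,y} @ restrict_word X {x,y}" using wT2 by simp
      finally have "alternate_in w x y" unfolding alternate_in_def
        using pair_restrict_counts11[OF cX[OF that(1)] cX[OF that(2)] that(3)] by simp
      then show ?thesis using rep that unfolding represents_def T_def by auto
    qed
    have "contains_induced_clique V E (card V - 1)" unfolding contains_induced_clique_def
      using clique cT by (intro exI[of _ T]) (auto simp: T_def n_def)
    moreover have "circle_graph V E" using circ2 ku rep kk by simp
    ultimately show False using excl by simp
  next
    case True
    have wT2: "w = u' @ X @ X @ v'" using wT True sw restrict_all[of w V] by simp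
    define uv where "uv = u' @ v'"
    have "restrict_word w V = w" using sw by (intro restrict_all) simp
    then have lw: "length w = k * n" using lT True unfolding n_def by simp
    have luv: "length uv \<le> 2" using lw len wT2 unfolding uv_def n_def by simp
    have sX: "set X \<subseteq> V" using wT2 sw by auto
    have suv: "set uv \<subseteq> V" using wT2 sw by (auto simp: uv_def)
    have cnt: "count_list uv y + 2 * count_list X y = count_list w y" for y
      using wT2 by (simp add: uv_def)
    have "\<not> V \<subseteq> set uv"
    proof
      assume "V \<subseteq> set uv"
      then have "card V \<le> card (set uv)" by (intro card_mono) auto
      also have "\<dots> \<le> length uv" by (rule card_length)
      finally show False using luv n3 by simp
    qed
    then obtain c where c: "c \<in> V" "c \<notin> set uv" by auto
    define m where "m = count_list X c"
    have km: "k = 2 * m" using cnt[of c] cw[OF c(1)] c(2) by (simp add: m_def)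
    have m1: "m \<ge> 1" using k2 km by simp
    have cntV: "count_list uv y + 2 * count_list X y = 2 * m" if "y \<in> V" for y
      using cnt[of y] cw[OF that] km by simp
    show False
    proof (cases "uv = []")
      case True
      have cX: "count_list X y = m" if "y \<in> V" for y using cntV[OF that] True by simp
      have setX: "set X = V"
      proof
        show "V \<subseteq> set X" using cX m1 by (auto intro!: count_pos_in)
      qed (rule sX)
      have kuX: "k_uniform m X" using cX sX by (auto simp: k_uniform_def)
      have "alternate_in X x y \<longleftrightarrow> alternate_in w x y" if "x \<in> V" "y \<in> V" "x \<noteq> y" for x y
      proof -
        define R where "R = restrict_word X {x,y}"
        have "restrict_word w {x,y} = R @ R" using wT2 True by (simp add: R_def uv_def)
        moreover have "count_list R x = count_list R y" "count_list R x = m"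
          using cX that by (auto simp: R_def)
        moreover have "R \<noteq> []" using calculation(3) m1 by auto
        ultimately show ?thesis unfolding alternate_in_def
          using alt_sq_eq[of R x y] that by (simp add: R_def)
      qed
      then have "represents V E X" using rep setX unfolding represents_def by auto
      then show False using minl[OF _ kuX] km m1 by simp
    next
      case False
      define a where "a = hd uv"
      have a: "a \<in> set uv" using False by (simp add: a_def)
      have aV: "a \<in> V" using a suv by auto
      have "count_list uv a \<ge> 1" using a by (metis One_nat_def Suc_leI count_list_0_iff neq0_conv)
      moreover have "count_list uv a \<le> 2" using count_le_length[of uv a] luv by simp
      moreover have "even (count_list uv a)" using cntV[OF aV] by presburger
      ultimately have ca: "count_list uv a = 2" by presburger
      have c0: "count_list uv y = 0" if "y \<noteq> a" for y
        using count_two_le[OF that, of uv] ca luv by simp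
      have suva: "set uv \<subseteq> {a}" using c0 by (metis count_list_0_iff insertCI subsetI)
      have cXa: "count_list X a = m - 1" using cntV[OF aV] ca by simp
      have cXy: "count_list X y = m" if "y \<in> V" "y \<noteq> a" for y using cntV[OF that(1)] c0[OF that(2)] by simp
      have ru: "restrict_word u' {x,y} = []" "restrict_word v' {x,y} = []" if "x \<noteq> a" "y \<noteq> a" for x y
        using suva that unfolding uv_def restrict_word_def by (auto simp: filter_empty_conv)
      have wxy: "restrict_word w {x,y} = restrict_word X {x,y} @ restrict_word X {x,y}"
        if "x \<noteq> a" "y \<noteq> a" for x y
        using ru[OF that] wT2 by simp
      have noa: "\<not> alternate_in w a y" if "y \<in> V" "y \<noteq> a" for y
      proof
        assume h: "alternate_in w a y"
        define R where "R = restrict_word X {a,y}"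
        have "alternating_list (restrict_word u' {a,y} @ (R @ R) @ restrict_word v' {a,y})"
          using h wT2 unfolding alternate_in_def R_def by simp
        then have "alternating_list (R @ R)" by (rule alt_mid)
        moreover have "set R \<subseteq> {y,a}" by (auto simp: R_def)
        moreover have "count_list R y = Suc (count_list R a)"
          using cXa cXy[OF that] m1 that by (auto simp: R_def)
        ultimately show False using alt_sq_neq[of R y a] that by simp
      qed
      have noa': "\<not> alternate_in w y a" if "y \<in> V" "y \<noteq> a" for y
        using noa[OF that] by (simp add: alternate_in_def insert_commute)
      show False
      proof (cases "m = 1")
        case True
        have clique: "(x,y) \<in> E" if "x \<in> V - {a}" "y \<in> V - {a}" "x \<noteq> y" for x y
        proof -
          have "count_list X x = 1" "count_list X y = 1" using cXy that True by auto
          then have "alternating_list (restrict_word X {x,y} @ restrict_word X {x,y})"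
            using pair_restrict_counts11[of X x y] that(3) by simp
          then have "alternate_in w x y" unfolding alternate_in_def using wxy[of x y] that by simp
          then show ?thesis using rep that unfolding represents_def by auto
        qed
        have cd: "card (V - {a}) = card V - 1" using fin aV by (simp add: card_Diff_singleton)
        have "contains_induced_clique V E (card V - 1)" unfolding contains_induced_clique_def
        proof (intro exI[of _ "V - {a}"] conjI)
          show "\<forall>x\<in>V - {a}. \<forall>y\<in>V - {a}. x \<noteq> y \<longrightarrow> (x, y) \<in> E" using clique by blast
        qed (use cd in auto)
        moreover have "circle_graph V E" using circ2 ku rep km True by simp
        ultimately show False using excl by simp
      next
        case False
        then have m2: "m \<ge> 2" using m1 by simp
        define X' where "X' = restrict_word X (V - {a})"
        define W where "W = replicate m a @ X'"
        have cW: "count_list W y = m" if "y \<in> V" for y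
        proof (cases "y = a")
          case True then show ?thesis by (simp add: W_def X'_def count_replicate)
        next
          case False then show ?thesis using cXy[OF that False] that
            by (simp add: W_def X'_def count_replicate)
        qed
        have sW: "set W = V"
        proof
          show "V \<subseteq> set W"
          proof
            fix y assume "y \<in> V"
            then have "0 < count_list W y" using cW m1 by simp
            then show "y \<in> set W" by (rule count_pos_in)
          qed
          show "set W \<subseteq> V" using aV sX m1 by (auto simp: W_def X'_def)
        qed
        have kuW: "k_uniform m W" using cW sW by (auto simp: k_uniform_def)
        have "alternate_in W x y \<longleftrightarrow> alternate_in w x y" if "x \<in> V" "y \<in> V" "x \<noteq> y" for x y
        proof (cases "a \<in> {x,y}")
          case True
          obtain j where j: "m = Suc (Suc j)" using m2 by (metis add_2_eq_Suc le_Suc_ex)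
          have rep2: "replicate m a = a # a # replicate j a" using j by simp
          have "\<not> alternate_in W x y" unfolding alternate_in_def W_def rep2 using True by simp
          moreover have "\<not> alternate_in w x y" using True noa noa' that by auto
          ultimately show ?thesis by simp
        next
          case False
          define R where "R = restrict_word X {x,y}"
          have "restrict_word W {x,y} = R" using False that
          proof -
            have "(V - {a}) \<inter> {x,y} = {x,y}" using False that by auto
            then show ?thesis using False by (simp add: W_def X'_def R_def restrict_replicate)
          qed
          moreover have "restrict_word w {x,y} = R @ R" using False wxy[of x y] by (auto simp: R_def)
          moreover have "count_list R x = m" "count_list R y = m"
            using cXy that False by (auto simp: R_def)
          moreover have "R \<noteq> []" using calculation(3) m1 by auto
          moreover have "set R \<subseteq> {x,y}" by (auto simp: R_def)
          ultimately show ?thesis unfolding alternate_in_def using alt_sq_eq[of R x y] that by simp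
        qed
        then have "represents V E W" using rep sW unfolding represents_def by auto
        then show False using minl[OF _ kuW] km m1 by simp
      qed
    qed
  qed
qed



theorem mainTheorem10:
  fixes V :: "'a set" and E :: "('a \<times> 'a) set"
  assumes "simple_graph V E"
    and "V \<noteq> {}"
    and "word_representable V E"
    and "\<not> (circle_graph V E \<and> contains_induced_clique V E (card V - 1))"
  shows "p_csf_uniform_word_representable
           (nat (ceiling (real (representation_number V E * card V) / 2) - 1)) V E"
proof -
  have fin: "finite V" using assms(1) by (simp add: simple_graph_def)
  show ?thesis
  proof (cases "card V \<le> 2")
    case True
    then show ?thesis using small_excluded[OF assms(1,2)] assms(4) by simp
  next
    case False
    then have n3: "card V \<ge> 3" by simp
    obtain w0 where rep0: "represents V E w0" using assms(3) by (auto simp: word_representable_def)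
    obtain k0 w1 where kw1: "k_uniform k0 w1" "represents V E w1" using uniformize[OF fin rep0] by blast
    define k where "k = representation_number V E"
    have "\<exists>w. k_uniform k w \<and> represents V E w" unfolding k_def representation_number_def
      by (rule LeastI_ex) (use kw1 in blast)
    then obtain w where ku: "k_uniform k w" and rep: "represents V E w" by blast
    have minl: False if "j < k" "k_uniform j w'" "represents V E w'" for j w'
      using not_less_Least[OF that(1)[unfolded k_def representation_number_def]] that(2,3) by blast
    have sw: "set w = V" using rep by (simp add: represents_def)
    obtain a where aV: "a \<in> V" using assms(2) by auto
    have cwa: "count_list w a = k" using ku sw aV by (simp add: k_uniform_def)
    have k1: "k \<ge> 1"
    proof (rule ccontr)
      assume "\<not> k \<ge> 1"
      then have "count_list w a = 0" using cwa by simp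
      then show False using aV sw by (simp add: count_list_0_iff)
    qed
    define p where "p = nat (ceiling (real (k * card V) / 2) - 1)"
    have psf: "p_complete_square_free p w"
      unfolding p_complete_square_free_def has_p_complete_square_def
    proof (intro notI, elim exE conjE)
      fix S X u v
      assume sq: "X \<noteq> []" "set X \<subseteq> S" "p \<le> length X" "restrict_word w S = u @ X @ X @ v"
      show False
      proof (cases "k = 1")
        case True
        have "\<forall>z. count_list w z \<le> 1"
        proof
          fix z show "count_list w z \<le> 1"
            using ku True by (cases "z \<in> set w") (auto simp: k_uniform_def)
        qed
        then have "distinct w" by (rule distinct_counts)
        then have "distinct (restrict_word w S)" by (simp add: restrict_word_def)
        then show False using sq(1,4) by (cases X) auto
      next
        case False
        then have k2: "k \<ge> 2" using k1 by simp
        have "k * card V \<le> 2 * p + 2" unfolding p_def by (rule arith_p)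
        then have len: "k * card V \<le> 2 * length X + 2" using sq(3) by linarith
        show False using core[OF assms(1) n3 assms(4) ku rep minl k2 sq(1,2,4) len] .
      qed
    qed
    show ?thesis unfolding p_csf_uniform_word_representable_def
      using ku rep psf by (auto simp: uniform_word_def p_def k_def)
  qed
qed


end
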